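(* Let $(X,d)$ be a metric space with a II-modulus of total boundedness $\gamma$, and let $(x_n),(y_n)$ be sequences in $X$. Define recursively $n_0:=0$ and $$n_{k+1}:=\left\lceil \max_{i,j\le k}\{n_k,\ d(x_{n_i},y_{n_j}),\ d(x_{n_i},x_{n_j}),\ d(y_{n_i},y_{n_j})\}+3\right\rceil .$$ Then there exists $N\le n_{\gamma(0)}$ with $d(x_N,y_N)<N$.
   Context: $\mathbb{N}$ includes $0$. A map $\gamma:\mathbb{N}\to\mathbb{N}$ is a II-modulus of total boundedness for $X$ if for every $k\in\mathbb{N}$ and every sequence $(z_n)$ in $X$ there exist $0\le i<j\le\gamma(k)$ with $d(z_i,z_j)\le\frac1{k+1}$. *)

theory Defs
  imports "HOL-Analysis.Analysis"
begin

definition II_modulus :: "'a::metric_space set \<Rightarrow> (nat \<Rightarrow> nat) \<Rightarrow> bool" where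
  "II_modulus X \<gamma> \<longleftrightarrow>
     (\<forall>k. \<forall>z::nat \<Rightarrow> 'a. (\<forall>n. z n \<in> X) \<longrightarrow>
        (\<exists>i j. i < j \<and> j \<le> \<gamma> k \<and> dist (z i) (z j) \<le> 1 / (real k + 1)))"

text \<open>Given the list l = [n_0, ..., n_k], compute n_(k+1).\<close>
definition next_idx :: "(nat \<Rightarrow> 'a::metric_space) \<Rightarrow> (nat \<Rightarrow> 'a) \<Rightarrow> nat list \<Rightarrow> nat" where
  "next_idx x y l = nat \<lceil>Max ({real (last l)}
       \<union> {dist (x (l ! i)) (y (l ! j)) | i j. i < length l \<and> j < length l}
       \<union> {dist (x (l ! i)) (x (l ! j)) | i j. i < length l \<and> j < length l}
       \<union> {dist (y (l ! i)) (y (l ! j)) | i j. i < length l \<and> j < length l}) + 3\<rceil>"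

primrec idx_list :: "(nat \<Rightarrow> 'a::metric_space) \<Rightarrow> (nat \<Rightarrow> 'a) \<Rightarrow> nat \<Rightarrow> nat list" where
  "idx_list x y 0 = [0]"
| "idx_list x y (Suc k) = idx_list x y k @ [next_idx x y (idx_list x y k)]"

definition idx :: "(nat \<Rightarrow> 'a::metric_space) \<Rightarrow> (nat \<Rightarrow> 'a) \<Rightarrow> nat \<Rightarrow> nat" where
  "idx x y k = idx_list x y k ! k"

end

theory Submission
  imports Defs
begin

lemma len_idx_list: "length (idx_list x y k) = Suc k"
  by (induction k) auto

lemma idx_list_nth: "i \<le> k \<Longrightarrow> idx_list x y k ! i = idx x y i"
proof (induction k)
  case 0 then show ?case by (simp add: idx_def)
next
  case (Suc k)
  show ?case
  proof (cases "i = Suc k")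
    case True then show ?thesis by (simp add: idx_def)
  next
    case False
    then have "i \<le> k" using Suc.prems by simp
    then show ?thesis using Suc.IH by (simp add: nth_append len_idx_list)
  qed
qed

lemma idx_Suc: "idx x y (Suc k) = next_idx x y (idx_list x y k)"
  by (simp add: idx_def nth_append len_idx_list)

lemma last_idx_list: "last (idx_list x y k) = idx x y k"
  by (cases k) (auto simp: idx_def nth_append len_idx_list)

lemma bounds_Suc:
  fixes x y :: "nat \<Rightarrow> 'a::metric_space"
  assumes "i \<le> k" "j \<le> k"
  shows "real (idx x y k) + 3 \<le> real (idx x y (Suc k))"
    and "dist (x (idx x y i)) (y (idx x y j)) + 3 \<le> real (idx x y (Suc k))"
    and "dist (x (idx x y i)) (x (idx x y j)) + 3 \<le> real (idx x y (Suc k))"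
    and "dist (y (idx x y i)) (y (idx x y j)) + 3 \<le> real (idx x y (Suc k))"
proof -
  let ?l = "idx_list x y k"
  define S where "S = ({real (last ?l)}
       \<union> {dist (x (?l ! i)) (y (?l ! j)) | i j. i < length ?l \<and> j < length ?l}
       \<union> {dist (x (?l ! i)) (x (?l ! j)) | i j. i < length ?l \<and> j < length ?l}
       \<union> {dist (y (?l ! i)) (y (?l ! j)) | i j. i < length ?l \<and> j < length ?l})"
  have fin: "finite S" unfolding S_def by (auto intro!: finite_image_set2)
  have e: "real (idx x y (Suc k)) = real (nat \<lceil>Max S + 3\<rceil>)"
    by (simp add: idx_Suc next_idx_def S_def)
  have ge: "v \<in> S \<Longrightarrow> v + 3 \<le> real (idx x y (Suc k))" for v
  proof -
    assume "v \<in> S"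
    then have "v \<le> Max S" using fin by simp
    also have "Max S + 3 \<le> real (nat \<lceil>Max S + 3\<rceil>)" by linarith
    finally show ?thesis using e by linarith
  qed
  have li: "i < length ?l" "j < length ?l" using assms by (auto simp: len_idx_list)
  have ni: "?l ! i = idx x y i" "?l ! j = idx x y j" using assms by (auto simp: idx_list_nth)
  show "real (idx x y k) + 3 \<le> real (idx x y (Suc k))"
    by (rule ge) (simp add: S_def last_idx_list)
  have "dist (x (?l ! i)) (y (?l ! j)) \<in> S" unfolding S_def using li by blast
  then show "dist (x (idx x y i)) (y (idx x y j)) + 3 \<le> real (idx x y (Suc k))"
    using ge ni by simp
  have "dist (x (?l ! i)) (x (?l ! j)) \<in> S" unfolding S_def using li by blast
  then show "dist (x (idx x y i)) (x (idx x y j)) + 3 \<le> real (idx x y (Suc k))"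
    using ge ni by simp
  have "dist (y (?l ! i)) (y (?l ! j)) \<in> S" unfolding S_def using li by blast
  then show "dist (y (idx x y i)) (y (idx x y j)) + 3 \<le> real (idx x y (Suc k))"
    using ge ni by simp
qed

lemma bounds:
  fixes x y :: "nat \<Rightarrow> 'a::metric_space"
  assumes "i < m" "j < m"
  shows "dist (x (idx x y i)) (y (idx x y j)) + 3 \<le> real (idx x y m)"
    and "dist (x (idx x y i)) (x (idx x y j)) + 3 \<le> real (idx x y m)"
    and "dist (y (idx x y i)) (y (idx x y j)) + 3 \<le> real (idx x y m)"
proof -
  obtain k where m: "m = Suc k" using assms by (cases m) auto
  have "i \<le> k" "j \<le> k" using assms m by auto
  then show "dist (x (idx x y i)) (y (idx x y j)) + 3 \<le> real (idx x y m)"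
    and "dist (x (idx x y i)) (x (idx x y j)) + 3 \<le> real (idx x y m)"
    and "dist (y (idx x y i)) (y (idx x y j)) + 3 \<le> real (idx x y m)"
    using bounds_Suc[where i=i and k=k and j=j and x=x and y=y] m by auto
qed

lemma idx_mono: "k \<le> m \<Longrightarrow> idx x y k \<le> idx x y m"
proof -
  have "idx x y k \<le> idx x y (Suc k)" for k
    using bounds_Suc(1)[of 0 k 0 x y] by simp
  then show "k \<le> m \<Longrightarrow> idx x y k \<le> idx x y m"
    by (rule lift_Suc_mono_le)
qed

theorem proposition2p5:
  fixes X :: "'a::metric_space set" and \<gamma> :: "nat \<Rightarrow> nat" and x y :: "nat \<Rightarrow> 'a"
  assumes "II_modulus X \<gamma>"
    and "\<And>n. x n \<in> X" and "\<And>n. y n \<in> X"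
  shows "\<exists>N \<le> idx x y (\<gamma> 0). dist (x N) (y N) < real N"
proof (rule ccontr)
  assume H: "\<not> ?thesis"
  define n where "n = idx x y"
  have far: "k \<le> \<gamma> 0 \<Longrightarrow> real (n k) \<le> dist (x (n k)) (y (n k))" for k
    using H idx_mono[of k "\<gamma> 0" x y] unfolding n_def by force
  define P where "P k = (\<exists>i<k. dist (x (n k)) (x (n i)) \<le> 1 \<or> dist (x (n k)) (y (n i)) \<le> 1)" for k
  define z where "z k = (if P k then y (n k) else x (n k))" for k
  have zX: "\<forall>m. z m \<in> X" using assms(2,3) by (simp add: z_def)
  have sym: "dist (y (n a)) (x (n b)) + 3 \<le> real (n m)" if "a < m" "b < m" for a b m
    using bounds(1)[OF that(2) that(1), of x y] by (simp add: n_def dist_commute)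
  have key: "dist (z j) (x (n i)) > 1 \<and> dist (z j) (y (n i)) > 1" if ij: "i < j" "j \<le> \<gamma> 0" for i j
  proof (cases "P j")
    case False
    then show ?thesis unfolding z_def P_def using ij by auto
  next
    case True
    then obtain i' where i': "i' < j" "dist (x (n j)) (x (n i')) \<le> 1 \<or> dist (x (n j)) (y (n i')) \<le> 1"
      unfolding P_def by blast
    have fj: "real (n j) \<le> dist (x (n j)) (y (n j))" using far ij by simp
    have b1: "dist (x (n a)) (y (n b)) + 3 \<le> real (n j)"
         "dist (x (n a)) (x (n b)) + 3 \<le> real (n j)"
         "dist (y (n a)) (y (n b)) + 3 \<le> real (n j)"
         "dist (y (n a)) (x (n b)) + 3 \<le> real (n j)" if "a < j" "b < j" for a b
      using bounds[OF that, where x=x and y=y] sym[OF that] by (auto simp: n_def)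
    have gen: "dist (y (n j)) q' > 1" if q: "dist (x (n j)) q \<le> 1" and qq: "dist q q' + 3 \<le> real (n j)" for q q'
    proof -
      have "dist (x (n j)) (y (n j)) \<le> dist (x (n j)) q + dist q q' + dist q' (y (n j))"
        by (metis dist_triangle add.commute add_le_cancel_left order_trans dist_triangle2)
      then show ?thesis using fj q qq by (simp add: dist_commute)
    qed
    show ?thesis using True i' ij b1[of i' i] gen unfolding z_def by (auto)
  qed
  obtain i j where "i < j" "j \<le> \<gamma> 0" "dist (z i) (z j) \<le> 1 / (real 0 + 1)"
    using assms(1) zX unfolding II_modulus_def by blast
  with key[of i j] show False by (simp add: z_def dist_commute split: if_splits)
qed

end
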